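(* Let $D=I\times[c-b,c+b]$ with $I$ a closed interval and $b>0$, and let $g_{[0]}=g_{[0]ij}du^i\otimes du^j$ be a Riemannian metric on $D$ (the reference state $M_{[0]}$, e.g. induced by a parametrization $\boldsymbol p_{[0]}:D\to\mathbb{E}^3$ of a surface). Let $C$ be the center curve $u^2=c$, let $s_{[0]}(u^1)=\sqrt{g_{[0]11}(u^1,c)}$ be its speed, and let $\kappa_{[0]}(u^1)$ be its geodesic curvature in $(D,g_{[0]})$. Let $\boldsymbol c_{[s]}:I\to\mathbb{R}^2$ be a solution of the ODE $$\ddot{\boldsymbol c}_{[s]}=\begin{pmatrix}\dot s_{[0]}/s_{[0]} & -\kappa_{[0]}s_{[0]}\\ \kappa_{[0]}s_{[0]} & \dot s_{[0]}/s_{[0]}\end{pmatrix}\dot{\boldsymbol c}_{[s]},\qquad \|\dot{\boldsymbol c}_{[s]}\|=s_{[0]},$$ where the dot denotes $d/du^1$, and define $\boldsymbol p_{[s]}:D\to\mathbb{R}^2$ by $$\boldsymbol p_{[s]}(u^1,u^2)=\boldsymbol c_{[s]}(u^1)+\begin{pmatrix}g_{[0]12}(u^1,c) & -\sqrt{\det_{i,j} g_{[0]ij}(u^1,c)}\\ \sqrt{\det_{i,j} g_{[0]ij}(u^1,c)} & g_{[0]12}(u^1,c)\end{pmatrix}\frac{(u^2-c)\,\dot{\boldsymbol c}_{[s]}(u^1)}{g_{[0]11}(u^1,c)},$$ and $M_{[s]}=\{\boldsymbol p_{[s]}(u^1,u^2):(u^1,u^2)\in D\}$. Then $M_{[s]}$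 satisfies: (a-1) the induced metric $g_{[s]ij}=\partial_i\boldsymbol p_{[s]}\cdot\partial_j\boldsymbol p_{[s]}$ coincides with $g_{[0]ij}$ on the center curve, i.e. $g_{[s]ij}(u^1,c)=g_{[0]ij}(u^1,c)$; (a-2) the planar curvature $\kappa_{[s]}$ of the center curve $\boldsymbol c_{[s]}(u^1)=\boldsymbol p_{[s]}(u^1,c)$ equals $\kappa_{[0]}$; (a-3) $\frac{\partial}{\partial u^2}\frac{\partial\boldsymbol p_{[s]}}{\partial u^2}=\boldsymbol 0$.
   Context: For a plane curve $\boldsymbol c$ with speed $s=\|\dot{\boldsymbol c}\|$, set $\boldsymbol e_1=\dot{\boldsymbol c}/s$ and $\boldsymbol e_2=\begin{pmatrix}0&-1\\1&0\end{pmatrix}\boldsymbol e_1$; its planar curvature $\kappa$ is defined by $\dot{\boldsymbol e}_1=s\kappa\boldsymbol e_2$. The geodesic curvature $\kappa_{[0]}$ of the center curve is taken with the sign convention given by the orientation of the coordinates $(u^1,u^2)$ (the unit normal is the one making a positively oriented orthonormal frame with the unit tangent). *)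

theory Defs
  imports "HOL-Analysis.Analysis"
begin

definition comp :: "nat \<Rightarrow> real \<times> real \<Rightarrow> real" where
  "comp k v = (if k = 1 then fst v else snd v)"

definition mat2 :: "real \<Rightarrow> real \<Rightarrow> real \<Rightarrow> real \<Rightarrow> real \<times> real \<Rightarrow> real \<times> real" where
  "mat2 a b c d v = (a * fst v + b * snd v, c * fst v + d * snd v)"

definition rot90 :: "real \<times> real \<Rightarrow> real \<times> real" where
  "rot90 v = mat2 0 (-1) 1 0 v"

definition slice :: "(real \<times> real) set \<Rightarrow> nat \<Rightarrow> real \<times> real \<Rightarrow> real set" where
  "slice D k x = (if k = 1 then {t. (t, snd x) \<in> D} else {t. (fst x, t) \<in> D})"

definition line_through :: "nat \<Rightarrow> real \<times> real \<Rightarrow> real \<Rightarrow> real \<times> real" where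
  "line_through k x t = (if k = 1 then (t, snd x) else (fst x, t))"

definition has_pd :: "(real \<times> real) set \<Rightarrow> nat \<Rightarrow> (real \<times> real \<Rightarrow> 'a::real_normed_vector)
    \<Rightarrow> real \<times> real \<Rightarrow> 'a \<Rightarrow> bool" where
  "has_pd D k f x v \<longleftrightarrow>
     ((\<lambda>t. f (line_through k x t)) has_vector_derivative v) (at (comp k x) within slice D k x)"

definition pd :: "(real \<times> real) set \<Rightarrow> nat \<Rightarrow> (real \<times> real \<Rightarrow> 'a::real_normed_vector)
    \<Rightarrow> real \<times> real \<Rightarrow> 'a" where
  "pd D k f x = vector_derivative (\<lambda>t. f (line_through k x t)) (at (comp k x) within slice D k x)"

text \<open>A metric is given by its components g i j (i, j in {1,2}).\<close>
definition mdet :: "(nat \<Rightarrow> nat \<Rightarrow> real \<times> real \<Rightarrow> real) \<Rightarrow> real \<times> real \<Rightarrow> real" where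
  "mdet g x = g 1 1 x * g 2 2 x - g 1 2 x * g 2 1 x"

definition minv :: "(nat \<Rightarrow> nat \<Rightarrow> real \<times> real \<Rightarrow> real) \<Rightarrow> nat \<Rightarrow> nat \<Rightarrow> real \<times> real \<Rightarrow> real" where
  "minv g k l x =
     (if k = 1 \<and> l = 1 then g 2 2 x / mdet g x
      else if k = 2 \<and> l = 2 then g 1 1 x / mdet g x
      else if k = 1 \<and> l = 2 then - g 1 2 x / mdet g x
      else - g 2 1 x / mdet g x)"

definition riemannian_metric_on :: "(real \<times> real) set \<Rightarrow> (nat \<Rightarrow> nat \<Rightarrow> real \<times> real \<Rightarrow> real) \<Rightarrow> bool" where
  "riemannian_metric_on D g \<longleftrightarrow>
     (\<forall>i\<in>{1,2}. \<forall>j\<in>{1,2}. g i j differentiable_on D) \<and>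
     (\<forall>x\<in>D. g 1 2 x = g 2 1 x \<and> g 1 1 x > 0 \<and> mdet g x > 0)"

definition christoffel :: "(real \<times> real) set \<Rightarrow> (nat \<Rightarrow> nat \<Rightarrow> real \<times> real \<Rightarrow> real)
    \<Rightarrow> nat \<Rightarrow> nat \<Rightarrow> nat \<Rightarrow> real \<times> real \<Rightarrow> real" where
  "christoffel D g k i j x =
     (1/2) * (\<Sum>l\<in>{1,2}. minv g k l x *
        (pd D i (g j l) x + pd D j (g i l) x - pd D l (g i j) x))"

definition gdot :: "(nat \<Rightarrow> nat \<Rightarrow> real \<times> real \<Rightarrow> real) \<Rightarrow> real \<times> real
    \<Rightarrow> real \<times> real \<Rightarrow> real \<times> real \<Rightarrow> real" where
  "gdot g x u v = (\<Sum>i\<in>{1,2}. \<Sum>j\<in>{1,2}. g i j x * comp i u * comp j v)"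

text \<open>Geodesic curvature, at parameter t, of a curve gam : I -> D in (D,g):
  kappa = g(nabla_V V, N) / g(V,V), where V is the velocity, nabla_V V the covariant
  acceleration, and N the unit normal such that (V/|V|, N) is a positively oriented
  (w.r.t. the coordinates (u1,u2)) orthonormal frame.\<close>
definition geodesic_curvature :: "(real \<times> real) set \<Rightarrow> (nat \<Rightarrow> nat \<Rightarrow> real \<times> real \<Rightarrow> real)
    \<Rightarrow> real set \<Rightarrow> (real \<Rightarrow> real \<times> real) \<Rightarrow> real \<Rightarrow> real" where
  "geodesic_curvature D g I gam t =
     (let x = gam t;
          Vf = (\<lambda>s. vector_derivative gam (at s within I));
          V = Vf t;
          W = vector_derivative Vf (at t within I);
          A = (\<lambda>k. comp k W + (\<Sum>i\<in>{1,2}. \<Sum>j\<in>{1,2}.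
                    christoffel D g k i j x * comp i V * comp j V));
          Acc = (A 1, A 2);
          N = (THE N. gdot g x N N = 1 \<and> gdot g x V N = 0 \<and>
                      fst V * snd N - snd V * fst N > 0)
      in gdot g x Acc N / gdot g x V V)"

definition planar_curvature :: "real set \<Rightarrow> (real \<Rightarrow> real \<times> real) \<Rightarrow> real \<Rightarrow> real" where
  "planar_curvature I cv t =
     (let s = (\<lambda>t. norm (vector_derivative cv (at t within I)));
          e1 = (\<lambda>t. (1 / s t) *\<^sub>R vector_derivative cv (at t within I));
          e2 = (\<lambda>t. rot90 (e1 t))
      in THE k. (e1 has_vector_derivative ((s t * k) *\<^sub>R e2 t)) (at t within I))"

end

theory Submission
  imports Defs
begin


lemma mat2_scaleR: "mat2 a b c d (r *\<^sub>R v) = r *\<^sub>R mat2 a b c d v"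
  by (simp add: mat2_def algebra_simps)

lemma inner_div_pair: "inner ((A::real)/G, B/G) (A/G, B/G) = (A^2+B^2)/G^2"
  by (simp add: power_divide add_divide_distrib power2_eq_square)

lemma mat2_zero: "mat2 a b c d 0 = 0"
  by (simp add: mat2_def zero_prod_def)

theorem mainTheorem3:
  fixes a0 a1 c b :: real
    and g :: "nat \<Rightarrow> nat \<Rightarrow> real \<times> real \<Rightarrow> real"
    and cs dcs ddcs :: "real \<Rightarrow> real \<times> real"
    and p :: "real \<times> real \<Rightarrow> real \<times> real"
  defines "I \<equiv> {a0..a1}"
  defines "D \<equiv> I \<times> {c - b..c + b}"
  defines "s0 \<equiv> (\<lambda>u. sqrt (g 1 1 (u, c)))"
  defines "kappa0 \<equiv> (\<lambda>u. geodesic_curvature D g I (\<lambda>t. (t, c)) u)"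
  assumes "a0 < a1" and "b > 0"
    and metric: "riemannian_metric_on D g"
    and d1: "\<forall>u\<in>I. (cs has_vector_derivative dcs u) (at u within I)"
    and d2: "\<forall>u\<in>I. (dcs has_vector_derivative ddcs u) (at u within I)"
    and ode: "\<forall>u\<in>I. ddcs u =
       mat2 (vector_derivative s0 (at u within I) / s0 u) (- kappa0 u * s0 u)
            (kappa0 u * s0 u) (vector_derivative s0 (at u within I) / s0 u) (dcs u)"
    and speed: "\<forall>u\<in>I. norm (dcs u) = s0 u"
    and p_def: "\<forall>u1 u2. p (u1, u2) = cs u1 +
       mat2 (g 1 2 (u1, c)) (- sqrt (mdet g (u1, c)))
            (sqrt (mdet g (u1, c))) (g 1 2 (u1, c))
            (((u2 - c) / g 1 1 (u1, c)) *\<^sub>R dcs u1)"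
  shows "(\<forall>u\<in>I. \<exists>P :: nat \<Rightarrow> real \<times> real.
              has_pd D 1 p (u, c) (P 1) \<and> has_pd D 2 p (u, c) (P 2) \<and>
              (\<forall>i\<in>{1,2}. \<forall>j\<in>{1,2}. inner (P i) (P j) = g i j (u, c)))
       \<and> (\<forall>u\<in>I. planar_curvature I (\<lambda>t. p (t, c)) u = kappa0 u)
       \<and> (\<forall>x\<in>D. \<exists>v. has_pd D 2 p x v)
       \<and> (\<forall>x\<in>D. has_pd D 2 (pd D 2 p) x 0)"
proof -
  have cI: "c \<in> {c - b..c + b}" using \<open>b > 0\<close> by simp
  have nz: "c - b < c + b" using \<open>b > 0\<close> by simp
  define W where "W = (\<lambda>u1. mat2 (g 1 2 (u1, c)) (- sqrt (mdet g (u1, c)))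
            (sqrt (mdet g (u1, c))) (g 1 2 (u1, c)) (dcs u1))"
  have p2: "p (u1, u2) = cs u1 + ((u2 - c) / g 1 1 (u1, c)) *\<^sub>R W u1" for u1 u2
    using p_def by (simp add: W_def mat2_scaleR)
  have pd2: "((\<lambda>t. p (u1, t)) has_vector_derivative (1 / g 1 1 (u1, c)) *\<^sub>R W u1) (at t within S)"
    for u1 t S
    unfolding p2
    by (cases "g 1 1 (u1, c) = 0") (auto intro!: derivative_eq_intros simp: divide_simps)
  have cs_eq: "(\<lambda>t. p (t, c)) = cs"
    using p_def by (simp add: mat2_zero)
  have part1: "\<forall>u\<in>I. \<exists>P :: nat \<Rightarrow> real \<times> real.
              has_pd D 1 p (u, c) (P 1) \<and> has_pd D 2 p (u, c) (P 2) \<and>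
              (\<forall>i\<in>{1,2}. \<forall>j\<in>{1,2}. inner (P i) (P j) = g i j (u, c))"
  proof
    fix u assume u: "u \<in> I"
    have uD: "(u, c) \<in> D" using u cI by (simp add: D_def)
    have sl1: "slice D 1 (u, c) = I" using cI by (auto simp: slice_def D_def)
    have h1: "has_pd D 1 p (u, c) (dcs u)"
      unfolding has_pd_def sl1 using d1 u cs_eq by (simp add: line_through_def comp_def)
    have h2: "has_pd D 2 p (u, c) ((1 / g 1 1 (u, c)) *\<^sub>R W u)"
      unfolding has_pd_def using pd2 by (simp add: line_through_def comp_def)
    have gpos: "g 1 1 (u, c) > 0" "mdet g (u, c) > 0" "g 1 2 (u, c) = g 2 1 (u, c)"
      using metric uD by (auto simp: riemannian_metric_on_def)
    obtain x y where xy: "dcs u = (x, y)" by fastforce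
    have n: "x^2 + y^2 = g 1 1 (u, c)"
    proof -
      have "norm (x, y) = sqrt (g 1 1 (u, c))"
        using speed u xy unfolding s0_def by metis
      then have "sqrt (x^2 + y^2) = sqrt (g 1 1 (u, c))"
        by (simp add: norm_Pair)
      then show ?thesis by simp
    qed
    have sq: "(sqrt (mdet g (u, c)))^2 = g 1 1 (u, c) * g 2 2 (u, c) - g 1 2 (u, c) * g 1 2 (u, c)"
      using gpos by (simp add: mdet_def)
    define P where "P = (\<lambda>i::nat. if i = 1 then dcs u else (1 / g 1 1 (u, c)) *\<^sub>R W u)"
    have "inner (P i) (P j) = g i j (u, c)" if "i \<in> {1,2}" "j \<in> {1,2}" for i j
    proof -
      let ?G = "g 1 1 (u, c)" and ?h = "g 1 2 (u, c)" and ?s = "sqrt (mdet g (u, c))"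
      have e11: "inner (P 1) (P 1) = ?G" using n xy by (simp add: P_def power2_eq_square)
      have "inner (P 1) (P 2) = (x*(?h*x - ?s*y) + y*(?s*x + ?h*y)) / ?G"
        using xy gpos by (simp add: P_def W_def mat2_def field_simps)
      also have "\<dots> = ?h * (x^2+y^2) / ?G" by (simp add: algebra_simps power2_eq_square)
      also have "\<dots> = ?h" using n gpos by simp
      finally have e12: "inner (P 1) (P 2) = ?h" .
      have e21: "inner (P 2) (P 1) = ?h" using e12 by (simp add: inner_commute)
      have "inner (P 2) (P 2) = ((?h*x - ?s*y)^2 + (?s*x + ?h*y)^2) / ?G^2"
      proof -
        have "P 2 = ((?h*x - ?s*y)/?G, (?s*x+?h*y)/?G)"
          using xy by (simp add: P_def W_def mat2_def)
        then show ?thesis by (simp only: inner_div_pair)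
      qed
      also have "\<dots> = (?h^2 + ?s^2) * (x^2+y^2) / ?G^2"
      proof -
        have "(?h*x - ?s*y)^2 + (?s*x + ?h*y)^2 = (?h^2 + ?s^2) * (x^2+y^2)" by algebra
        then show ?thesis by simp
      qed
      also have "\<dots> = g 2 2 (u, c)" using n sq gpos by (simp add: power2_eq_square field_simps)
      finally have e22: "inner (P 2) (P 2) = g 2 2 (u, c)" .
      show ?thesis using that e11 e12 e21 e22 gpos by auto
    qed
    then show "\<exists>P :: nat \<Rightarrow> real \<times> real.
              has_pd D 1 p (u, c) (P 1) \<and> has_pd D 2 p (u, c) (P 2) \<and>
              (\<forall>i\<in>{1,2}. \<forall>j\<in>{1,2}. inner (P i) (P j) = g i j (u, c))"
      using h1 h2 by (intro exI[of _ P]) (auto simp: P_def)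
  qed
  have ab: "a0 < a1" by fact
  have vd_cs: "vector_derivative cs (at t within I) = dcs t" if "t \<in> I" for t
    unfolding I_def
    by (rule vector_derivative_within_closed_interval[OF ab]) (use that d1 in \<open>auto simp: I_def\<close>)
  have part2: "\<forall>u\<in>I. planar_curvature I (\<lambda>t. p (t, c)) u = kappa0 u"
  proof
    fix u assume u: "u \<in> I"
    have uD: "(u, c) \<in> D" using u cI by (simp add: D_def)
    have gpos: "g 1 1 (u, c) > 0"
      using metric uD by (auto simp: riemannian_metric_on_def)
    have s0pos: "s0 u > 0" using gpos by (simp add: s0_def)
    have gdiff: "g 1 1 differentiable (at (u, c) within D)"
      using metric uD by (auto simp: riemannian_metric_on_def differentiable_on_def)
    have "(g 1 1 \<circ> (\<lambda>t. (t, c))) differentiable (at u within I)"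
    proof (rule differentiable_chain_within)
      show "(\<lambda>t. (t, c)) differentiable (at u within I)"
        by (auto intro!: derivative_intros)
      show "g 1 1 differentiable (at (u, c) within (\<lambda>t. (t, c)) ` I)"
        by (rule differentiable_within_subset[OF gdiff]) (use cI in \<open>auto simp: D_def\<close>)
    qed
    then obtain h' where h': "((\<lambda>t. g 1 1 (t, c)) has_real_derivative h') (at u within I)"
      by (auto simp: o_def vector_derivative_works has_real_derivative_iff_has_vector_derivative)
    define s0' where "s0' = inverse (sqrt (g 1 1 (u, c))) / 2 * h'"
    have s0d: "(s0 has_real_derivative s0') (at u within I)"
      unfolding s0_def s0'_def
      by (rule DERIV_chain2[OF DERIV_real_sqrt h']) (use gpos in simp)
    have vds0: "vector_derivative s0 (at u within I) = s0'"
      unfolding I_def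
      by (rule vector_derivative_within_closed_interval[OF ab])
        (use u s0d in \<open>auto simp: I_def has_real_derivative_iff_has_vector_derivative\<close>)
    define k where "k = kappa0 u"
    have ddcs_u: "ddcs u = mat2 (s0' / s0 u) (- k * s0 u) (k * s0 u) (s0' / s0 u) (dcs u)"
      using ode u vds0 by (simp add: k_def)
    define F where "F = (\<lambda>t. inverse (s0 t) *\<^sub>R dcs t)"
    have Fd: "(F has_vector_derivative
        (inverse (s0 u) *\<^sub>R ddcs u + (- (inverse (s0 u) * s0' * inverse (s0 u))) *\<^sub>R dcs u))
        (at u within I)"
      unfolding F_def
      by (rule has_vector_derivative_scaleR[OF DERIV_inverse'[OF s0d] d2[rule_format, OF u]])
        (use s0pos in simp)
    obtain x y where xy: "dcs u = (x, y)" by fastforce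
    have val: "inverse (s0 u) *\<^sub>R ddcs u + (- (inverse (s0 u) * s0' * inverse (s0 u))) *\<^sub>R dcs u
        = (s0 u * k) *\<^sub>R rot90 ((1 / s0 u) *\<^sub>R dcs u)"
      using s0pos unfolding ddcs_u xy
      by (simp add: mat2_def rot90_def field_simps)
    let ?VD = "\<lambda>t. vector_derivative (\<lambda>t. p (t, c)) (at t within I)"
    let ?s = "\<lambda>t. norm (?VD t)"
    let ?e1 = "\<lambda>t. (1 / ?s t) *\<^sub>R ?VD t"
    let ?e2 = "\<lambda>t. rot90 (?e1 t)"
    have e1F: "?e1 t = F t" if "t \<in> I" for t
      using that vd_cs speed by (simp add: cs_eq F_def divide_inverse)
    have su: "?s u = s0 u" using u vd_cs speed by (simp add: cs_eq)
    have e2u: "?e2 u = rot90 ((1 / s0 u) *\<^sub>R dcs u)"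
      using e1F[OF u] by (simp add: F_def divide_inverse)
    have P: "(?e1 has_vector_derivative ((?s u * k) *\<^sub>R ?e2 u)) (at u within I)"
    proof -
      have "(?e1 has_vector_derivative ((s0 u * k) *\<^sub>R rot90 ((1 / s0 u) *\<^sub>R dcs u))) (at u within I)"
        unfolding val[symmetric] by (rule has_vector_derivative_transform[OF u e1F Fd])
      moreover have "?VD u = dcs u" using vd_cs u by (simp add: cs_eq)
      moreover have "norm (dcs u) = s0 u" using speed u by simp
      ultimately show ?thesis by simp
    qed
    have e2nz: "?e2 u \<noteq> 0"
    proof
      assume "?e2 u = 0"
      then have "x = 0 \<and> y = 0" unfolding e2u xy using s0pos
        by (simp add: rot90_def mat2_def zero_prod_def)
      then have "norm (dcs u) = 0" using xy by simp
      then show False using speed u s0pos by simp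
    qed
    have "(THE k. (?e1 has_vector_derivative ((?s u * k) *\<^sub>R ?e2 u)) (at u within I)) = k"
    proof (rule the_equality)
      show "(?e1 has_vector_derivative ((?s u * k) *\<^sub>R ?e2 u)) (at u within I)" by (rule P)
      fix k' assume "(?e1 has_vector_derivative ((?s u * k') *\<^sub>R ?e2 u)) (at u within I)"
      then have "(?s u * k') *\<^sub>R ?e2 u = (?s u * k) *\<^sub>R ?e2 u"
        using P u unfolding I_def
        by (intro vector_derivative_unique_within_closed_interval[OF ab]) auto
      then show "k' = k" using e2nz su s0pos by simp
    qed
    then show "planar_curvature I (\<lambda>t. p (t, c)) u = kappa0 u"
      unfolding planar_curvature_def k_def by (simp add: Let_def)
  qed
  have part3: "\<forall>x\<in>D. \<exists>v. has_pd D 2 p x v"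
  proof
    fix x :: "real \<times> real"
    show "\<exists>v. has_pd D 2 p x v"
      unfolding has_pd_def line_through_def comp_def using pd2[of "fst x"] by (intro exI) simp
  qed
  have part4: "\<forall>x\<in>D. has_pd D 2 (pd D 2 p) x 0"
  proof
    fix x assume x: "x \<in> D"
    have sl: "slice D 2 y = {c - b..c + b}" if "fst y = fst x" for y
      using x that by (auto simp: slice_def D_def)
    have "((\<lambda>t. pd D 2 p (line_through 2 x t)) has_vector_derivative 0)
            (at (snd x) within {c - b..c + b})"
    proof (rule has_vector_derivative_transform[OF _ _ has_vector_derivative_const])
      show "snd x \<in> {c - b..c + b}" using x by (auto simp: D_def)
      fix t assume t: "t \<in> {c - b..c + b}"
      show "pd D 2 p (line_through 2 x t) = (1 / g 1 1 (fst x, c)) *\<^sub>R W (fst x)"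
        unfolding pd_def
        apply (subst sl)
         apply (simp add: line_through_def)
        apply (rule vector_derivative_within_closed_interval[OF nz])
        using t apply (simp add: line_through_def comp_def)
        using pd2 by (simp add: line_through_def comp_def)
    qed
    then show "has_pd D 2 (pd D 2 p) x 0"
      unfolding has_pd_def comp_def using sl[of x] by simp
  qed
  show ?thesis using part1 part2 part3 part4 by blast
qed

end
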